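(* Let $\Omega\subset\mathbb R^m$ be an open, bounded, convex set and let $h:\mathbb R^k\times\Omega\to\mathbb R$ be continuous, such that for each $\mathcal X\in\mathbb R^k$ the function $h(\mathcal X,\cdot)$ is concave on $\Omega$. Then $H(\mathcal X):=\sup_{\tau\in\Omega}h(\mathcal X,\tau)$ is continuous on $\mathbb R^k$. *)

theory Defs
  imports "HOL-Analysis.Analysis"
begin

end

theory Submission
  imports Defs
begin

lemma shrink_in:
  fixes \<Omega> :: "(real ^ 'm) set"
  assumes "open \<Omega>" "convex \<Omega>" "c \<in> \<Omega>" "x \<in> closure \<Omega>" "0 \<le> t" "t < 1"
  shows "(1 - t) *\<^sub>R c + t *\<^sub>R x \<in> \<Omega>"
proof -
  have "x - (1 - t) *\<^sub>R (x - c) \<in> interior \<Omega>"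
    by (rule mem_interior_closure_convex_shrink) (use assms interior_open in auto)
  moreover have "x - (1 - t) *\<^sub>R (x - c) = (1 - t) *\<^sub>R c + t *\<^sub>R x"
    by (simp add: algebra_simps)
  ultimately show ?thesis using assms interior_open by auto
qed

lemma slice_cont:
  fixes h :: "real ^ 'k \<Rightarrow> real ^ 'm \<Rightarrow> real"
  assumes "continuous_on (UNIV \<times> \<Omega>) (\<lambda>(X, \<tau>). h X \<tau>)" "K \<subseteq> \<Omega>"
  shows "continuous_on K (h X)"
proof -
  have "continuous_on K (\<lambda>\<sigma>. (X, \<sigma>))" by (intro continuous_intros)
  moreover have "(\<lambda>\<sigma>. (X, \<sigma>)) ` K \<subseteq> UNIV \<times> \<Omega>" using assms by auto
  ultimately have "continuous_on K ((\<lambda>(X, \<tau>). h X \<tau>) \<circ> (\<lambda>\<sigma>. (X, \<sigma>)))"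
    using continuous_on_compose continuous_on_subset assms(1) by blast
  then show ?thesis by (simp add: o_def)
qed

lemma slice_cont2:
  fixes h :: "real ^ 'k \<Rightarrow> real ^ 'm \<Rightarrow> real"
  assumes "continuous_on (UNIV \<times> \<Omega>) (\<lambda>(X, \<tau>). h X \<tau>)" "\<tau>0 \<in> \<Omega>"
  shows "continuous_on UNIV (\<lambda>X. h X \<tau>0)"
proof -
  have c: "continuous_on UNIV (\<lambda>X. (X, \<tau>0))" by (intro continuous_intros)
  have "(\<lambda>X. (X, \<tau>0)) ` UNIV \<subseteq> UNIV \<times> \<Omega>" using assms(2) by auto
  from continuous_on_compose2[OF assms(1) c this] show ?thesis by simp
qed

theorem proposition7p1:
  fixes \<Omega> :: "(real ^ 'm) set"
    and h :: "real ^ 'k \<Rightarrow> real ^ 'm \<Rightarrow> real"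
  assumes "open \<Omega>" and "bounded \<Omega>" and "convex \<Omega>"
    and "continuous_on (UNIV \<times> \<Omega>) (\<lambda>(X, \<tau>). h X \<tau>)"
    and "\<And>X. concave_on \<Omega> (h X)"
  shows "continuous_on UNIV (\<lambda>X. SUP \<tau>\<in>\<Omega>. h X \<tau>)"
proof (cases "\<Omega> = {}")
  case True
  then show ?thesis by simp
next
  case False
  then obtain c where c: "c \<in> \<Omega>" by blast
  define K where "K t = (\<lambda>x. (1 - t) *\<^sub>R c + t *\<^sub>R x) ` closure \<Omega>" for t :: real
  have Ksub: "K t \<subseteq> \<Omega>" if "0 \<le> t" "t < 1" for t
    using shrink_in[OF assms(1,3) c _ that] unfolding K_def by auto
  have Kcomp: "compact (K t)" for t
    unfolding K_def using assms(2)
    by (intro compact_continuous_image continuous_intros) (simp add: compact_closure)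
  have cK: "c \<in> K t" for t
  proof -
    have "c = (1 - t) *\<^sub>R c + t *\<^sub>R c" by (simp add: algebra_simps)
    then show ?thesis unfolding K_def using c closure_subset by blast
  qed
  have key: "(1 - t) * h X c + t * h X \<tau> \<le> h X ((1 - t) *\<^sub>R c + t *\<^sub>R \<tau>)
      \<and> (1 - t) *\<^sub>R c + t *\<^sub>R \<tau> \<in> K t"
    if "\<tau> \<in> \<Omega>" "0 < t" "t < 1" for X \<tau> t
    using concave_onD[OF assms(5), of t c \<tau>] that c closure_subset unfolding K_def by auto
  have bdd: "bdd_above (h X ` \<Omega>)" for X
  proof -
    have "continuous_on (K (1/2)) (h X)"
      by (rule slice_cont[OF assms(4) Ksub]) auto
    then have "compact (h X ` K (1/2))" using Kcomp compact_continuous_image by blast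
    then obtain B where B: "\<And>y. y \<in> h X ` K (1/2) \<Longrightarrow> y \<le> B"
      using compact_imp_bounded bounded_has_Sup(1) by blast
    show ?thesis
    proof (rule bdd_aboveI2)
      fix \<tau> assume "\<tau> \<in> \<Omega>"
      from key[OF this, of "1/2" X] B show "h X \<tau> \<le> 2 * B - h X c" by force
    qed
  qed
  define H where "H X = (SUP \<tau>\<in>\<Omega>. h X \<tau>)" for X
  have Hge: "h X \<tau> \<le> H X" if "\<tau> \<in> \<Omega>" for X \<tau>
    unfolding H_def using bdd that by (simp add: cSUP_upper)
  show ?thesis
    unfolding continuous_on_iff H_def[symmetric]
  proof (intro ballI allI impI)
    fix X0 :: "real ^ 'k" and e :: real
    assume e: "e > 0"
    obtain \<tau>0 where t0: "\<tau>0 \<in> \<Omega>" "H X0 - e < h X0 \<tau>0"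
    proof -
      have "H X0 - e < H X0" using e by simp
      then have "\<exists>x\<in>\<Omega>. H X0 - e < h X0 x"
        unfolding H_def by (subst (asm) less_cSUP_iff[OF False bdd])
      then show ?thesis using that by blast
    qed
    have "continuous_on UNIV (\<lambda>X. h X \<tau>0)"
      by (rule slice_cont2[OF assms(4) t0(1)])
    note cont = this
    have pos: "h X0 \<tau>0 - (H X0 - e) > 0" using t0 by simp
    have "\<exists>d>0. \<forall>X\<in>UNIV. dist X X0 < d \<longrightarrow> dist (h X \<tau>0) (h X0 \<tau>0) < h X0 \<tau>0 - (H X0 - e)"
      by (rule continuous_on_iff[THEN iffD1, OF cont, rule_format, OF UNIV_I pos])
    then obtain d1 where d1: "d1 > 0" "\<And>X. dist X X0 < d1 \<Longrightarrow> dist (h X \<tau>0) (h X0 \<tau>0) < h X0 \<tau>0 - (H X0 - e)"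
      by blast
    have low: "H X0 - e < H X" if "dist X X0 < d1" for X
    proof -
      have "h X0 \<tau>0 - h X \<tau>0 < h X0 \<tau>0 - (H X0 - e)"
        using d1(2)[OF that] by (simp add: dist_real_def abs_less_iff)
      then show ?thesis using Hge[OF t0(1), of X] by linarith
    qed
    define D where "D = H X0 - h X0 c"
    have D0: "D \<ge> 0" unfolding D_def using Hge[OF c] by simp
    define t where "t = max (1/2) (1 - e / (8 * (D + 1)))"
    have t1: "1/2 \<le> t" "t < 1" unfolding t_def using e D0 by auto
    have tD: "(1 - t) * D \<le> e / 8"
    proof -
      have "(1 - t) \<le> e / (8 * (D + 1))" unfolding t_def by auto
      then have "(1 - t) * D \<le> e / (8 * (D + 1)) * D" by (rule mult_right_mono[OF _ D0])
      also have "\<dots> = e / 8 * (D / (D + 1))" by (simp add: field_simps)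
      also have "\<dots> \<le> e / 8"
      proof -
        have "D / (D + 1) \<le> 1" using D0 by simp
        then show ?thesis using e by (intro mult_left_le) auto
      qed
      finally show ?thesis .
    qed
    define S where "S = cball X0 1 \<times> K t"
    have "compact S" unfolding S_def using Kcomp by (intro compact_Times) auto
    moreover have "continuous_on S (\<lambda>(X, \<tau>). h X \<tau>)"
    proof (rule continuous_on_subset[OF assms(4)])
      show "S \<subseteq> UNIV \<times> \<Omega>" using Ksub[of t] t1 unfolding S_def by auto
    qed
    ultimately have uc: "uniformly_continuous_on S (\<lambda>(X, \<tau>). h X \<tau>)"
      using compact_uniformly_continuous by blast
    have e8: "e / 8 > 0" using e by simp
    have "\<exists>d>0. \<forall>x\<in>S. \<forall>x'\<in>S. dist x' x < d \<longrightarrow>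
        dist ((\<lambda>(X, \<tau>). h X \<tau>) x') ((\<lambda>(X, \<tau>). h X \<tau>) x) < e / 8"
      by (rule uc[unfolded uniformly_continuous_on_def, rule_format, OF e8])
    then obtain d2 where d2: "d2 > 0" "\<forall>x\<in>S. \<forall>x'\<in>S. dist x' x < d2 \<longrightarrow>
        dist ((\<lambda>(X, \<tau>). h X \<tau>) x') ((\<lambda>(X, \<tau>). h X \<tau>) x) < e / 8"
      by blast
    have close: "\<bar>h X \<sigma> - h X0 \<sigma>\<bar> < e / 8" if "dist X X0 < min 1 d2" "\<sigma> \<in> K t" for X \<sigma>
    proof -
      have m1: "(X0, \<sigma>) \<in> S" "(X, \<sigma>) \<in> S" using that unfolding S_def by (auto simp: dist_commute)
      have m2: "dist (X, \<sigma>) (X0, \<sigma>) < d2" using that by (simp add: dist_Pair_Pair)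
      have "dist ((\<lambda>(X, \<tau>). h X \<tau>) (X, \<sigma>)) ((\<lambda>(X, \<tau>). h X \<tau>) (X0, \<sigma>)) < e / 8"
        using d2(2) m1 m2 by blast
      then show ?thesis by (simp add: dist_real_def)
    qed
    have up: "H X \<le> H X0 + 3 * e / 4" if X: "dist X X0 < min 1 d2" for X
      unfolding H_def[of X]
    proof (rule cSUP_least[OF False])
      fix \<tau> assume \<tau>: "\<tau> \<in> \<Omega>"
      define \<sigma> where "\<sigma> = (1 - t) *\<^sub>R c + t *\<^sub>R \<tau>"
      have k: "(1 - t) * h X c + t * h X \<tau> \<le> h X \<sigma>" "\<sigma> \<in> K t"
        using key[OF \<tau>, of t X] t1 unfolding \<sigma>_def by auto
      have s\<Omega>: "\<sigma> \<in> \<Omega>" using k(2) Ksub[of t] t1 by auto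
      have a: "h X \<sigma> < h X0 \<sigma> + e / 8" using close[OF X k(2)] by linarith
      have b: "h X c > h X0 c - e / 8" using close[OF X cK] by linarith
      have c2: "h X0 \<sigma> \<le> H X0" using Hge[OF s\<Omega>] .
      have m: "(1 - t) * h X c \<ge> (1 - t) * (h X0 c - e / 8)"
        using b t1 by (intro mult_left_mono) auto
      have eq: "(1 - t) * (h X0 c - e / 8) = (1 - t) * H X0 - (1 - t) * D - (1 - t) * (e / 8)"
        unfolding D_def by (simp add: algebra_simps)
      have le: "(1 - t) * (e / 8) \<le> e / 8" using t1 e by (intro mult_left_le_one_le) auto
      have eq2: "t * H X0 = H X0 - (1 - t) * H X0" by (simp add: algebra_simps)
      have "t * h X \<tau> \<le> t * H X0 + (1 - t) * D + e / 4"
        using k(1) a c2 m eq le eq2 by linarith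
      also have "\<dots> \<le> t * H X0 + 3 * e / 8" using tD by simp
      also have "\<dots> \<le> t * (H X0 + 3 * e / 4)"
      proof -
        have "3 * e / 8 \<le> t * (3 * e / 4)" using t1 e by simp
        then show ?thesis by (simp add: distrib_left)
      qed
      finally show "h X \<tau> \<le> H X0 + 3 * e / 4" using t1 by simp
    qed
    show "\<exists>d>0. \<forall>X\<in>UNIV. dist X X0 < d \<longrightarrow> dist (H X) (H X0) < e"
    proof (intro exI[of _ "min d1 (min 1 d2)"] conjI ballI impI)
      show "min d1 (min 1 d2) > 0" using d1 d2 by simp
      fix X assume "dist X X0 < min d1 (min 1 d2)"
      then show "dist (H X) (H X0) < e"
        using low[of X] up[of X] e by (simp add: dist_real_def abs_less_iff)
    qed
  qed
qed

end
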